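(* Let $m\ge1$. The $0/1$ matrices $\mathcal{M}^{t,p}_{i,j}$ ($(i,j,t,p)\in\mathcal{I}_{(m,m)}$), $\mathcal{R}^{t,p}_{i,j}$ ($(i,j,t,p)\in\mathcal{I}_{(m,m+1)}$), $\mathcal{L}^{t,p}_{i,j}$ ($(i,j,t,p)\in\mathcal{I}_{(m+1,m)}$) and $\mathcal{F}^{t,p}_{i,j}$ ($(i,j,t,p)\in\mathcal{I}_{(m+1,m+1)}$) form a basis of the centralizer algebra $\mathcal{A}$, and $\dim\mathcal{A}=4\binom{m+4}{4}$.
   Context: $S=\{1,\dots,2m+1\}$, $X=\binom{S}{m}\cup\binom{S}{m+1}$ (vertex set of the doubled Odd graph $2.O_{m+1}$, in which two vertices are adjacent iff one is a proper subset of the other), $x_0=\{1,\dots,m\}$. $G=\mathrm{Sym}(x_0)\times\mathrm{Sym}(S\setminus x_0)$ (the stabilizer of $x_0$ in $\mathrm{Aut}(2.O_{m+1})$). The centralizer algebra $\mathcal{A}$ is the set of complex matrices $B$ with rows and columns indexed by $X$ such that $B_{\sigma(y),\sigma(z)}=B_{y,z}$ for all $\sigma\in G$, $y,z\in X$. For $y,z\subseteq S$, $\varrho(y,z)=(|x_0\cap y|,|x_0\cap z|,|y\cap z|,|x_0\cap y\cap z|)$; for $a,b\in\{m,m+1\}$, $\mathcal{I}_{(a,b)}=\{\varrho(y,z):y\in\binom{S}{a},z\in\binom{S}{b}\}$ and $X^{(i,j,t,p)}_{(a,b)}=\{(y,z)\in\binom{S}{a}\times\binom{S}{b}:\varrho(y,z)=(i,j,t,p)\}$.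 The matrices $\mathcal{M}^{t,p}_{i,j}$ (type I), $\mathcal{R}^{t,p}_{i,j}$ (type II), $\mathcal{L}^{t,p}_{i,j}$ (type III), $\mathcal{F}^{t,p}_{i,j}$ (type IV) are the $X\times X$ matrices whose $(y,z)$-entry is $1$ if $(y,z)$ lies in $X^{(i,j,t,p)}_{(m,m)}$, $X^{(i,j,t,p)}_{(m,m+1)}$, $X^{(i,j,t,p)}_{(m+1,m)}$, $X^{(i,j,t,p)}_{(m+1,m+1)}$ respectively, and $0$ otherwise. *)

theory Defs
  imports "HOL-Analysis.Analysis" "HOL-Library.Function_Algebras"
begin

type_synonym mat = "nat set \<Rightarrow> nat set \<Rightarrow> complex"

definition Sset :: "nat \<Rightarrow> nat set" where "Sset m = {1..2*m+1}"

definition ksub :: "nat set \<Rightarrow> nat \<Rightarrow> nat set set" where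
  "ksub A k = {y. y \<subseteq> A \<and> card y = k}"

definition Xset :: "nat \<Rightarrow> nat set set" where
  "Xset m = ksub (Sset m) m \<union> ksub (Sset m) (m+1)"

definition x0 :: "nat \<Rightarrow> nat set" where "x0 m = {1..m}"

definition Ggrp :: "nat \<Rightarrow> (nat \<Rightarrow> nat) set" where
  "Ggrp m = {\<sigma>. bij_betw \<sigma> (Sset m) (Sset m) \<and> \<sigma> ` x0 m = x0 m \<and> (\<forall>x. x \<notin> Sset m \<longrightarrow> \<sigma> x = x)}"

definition Xmats :: "nat \<Rightarrow> mat set" where
  "Xmats m = {B. \<forall>y z. (y \<notin> Xset m \<or> z \<notin> Xset m) \<longrightarrow> B y z = 0}"

definition centralizer :: "nat \<Rightarrow> mat set" where
  "centralizer m = {B \<in> Xmats m. \<forall>\<sigma>\<in>Ggrp m. \<forall>y\<in>Xset m. \<forall>z\<in>Xset m.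
       B (\<sigma> ` y) (\<sigma> ` z) = B y z}"

definition rho :: "nat \<Rightarrow> nat set \<Rightarrow> nat set \<Rightarrow> nat \<times> nat \<times> nat \<times> nat" where
  "rho m y z = (card (x0 m \<inter> y), card (x0 m \<inter> z), card (y \<inter> z), card (x0 m \<inter> y \<inter> z))"

definition Iset :: "nat \<Rightarrow> nat \<Rightarrow> nat \<Rightarrow> (nat \<times> nat \<times> nat \<times> nat) set" where
  "Iset m a b = {rho m y z | y z. y \<in> ksub (Sset m) a \<and> z \<in> ksub (Sset m) b}"

definition orbmat :: "nat \<Rightarrow> nat \<Rightarrow> nat \<Rightarrow> nat \<times> nat \<times> nat \<times> nat \<Rightarrow> mat" where
  "orbmat m a b q = (\<lambda>y z. if y \<in> ksub (Sset m) a \<and> z \<in> ksub (Sset m) b \<and> rho m y z = q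
                            then 1 else 0)"

definition Mmat :: "nat \<Rightarrow> nat \<times> nat \<times> nat \<times> nat \<Rightarrow> mat" where "Mmat m = orbmat m m m"
definition Rmat :: "nat \<Rightarrow> nat \<times> nat \<times> nat \<times> nat \<Rightarrow> mat" where "Rmat m = orbmat m m (m+1)"
definition Lmat :: "nat \<Rightarrow> nat \<times> nat \<times> nat \<times> nat \<Rightarrow> mat" where "Lmat m = orbmat m (m+1) m"
definition Fmat :: "nat \<Rightarrow> nat \<times> nat \<times> nat \<times> nat \<Rightarrow> mat" where "Fmat m = orbmat m (m+1) (m+1)"

text \<open>Index set of the whole family: type tag 0..3 (I,II,III,IV) together with the parameter.\<close>
definition basisIdx :: "nat \<Rightarrow> (nat \<times> (nat \<times> nat \<times> nat \<times> nat)) set" where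
  "basisIdx m = ({0} \<times> Iset m m m) \<union> ({1} \<times> Iset m m (m+1))
              \<union> ({2} \<times> Iset m (m+1) m) \<union> ({3} \<times> Iset m (m+1) (m+1))"

definition basisMat :: "nat \<Rightarrow> nat \<times> (nat \<times> nat \<times> nat \<times> nat) \<Rightarrow> mat" where
  "basisMat m k = (case fst k of 0 \<Rightarrow> Mmat m (snd k) | Suc 0 \<Rightarrow> Rmat m (snd k)
                  | Suc (Suc 0) \<Rightarrow> Lmat m (snd k) | _ \<Rightarrow> Fmat m (snd k))"

definition mscale :: "complex \<Rightarrow> mat \<Rightarrow> mat" where
  "mscale c B = (\<lambda>y z. c * B y z)"

end

theory Submission
  imports Defs
begin



interpretation VS: vector_space mscale
  by unfold_locales (auto simp: mscale_def fun_eq_iff algebra_simps)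

lemma sum_mat_apply: "(sum f A :: mat) y z = (\<Sum>a\<in>A. f a y z)"
  by (induction A rule: infinite_finite_induct) auto

lemma mscale_apply[simp]: "mscale c B y z = c * B y z" by (simp add: mscale_def)

lemma card_split: "finite A \<Longrightarrow> card A = card (A \<inter> B) + card (A - B)"
  by (rule card_Int_Diff)




definition reg :: "nat set \<Rightarrow> nat set \<Rightarrow> nat set \<Rightarrow> nat set \<Rightarrow> bool \<times> bool \<times> bool \<Rightarrow> nat set" where
 "reg S X y z l = {x\<in>S. (x\<in>X, x\<in>y, x\<in>z) = l}"

lemma venn:
  assumes fS: "finite S" and XS: "X \<subseteq> S" and yS: "y \<subseteq> S" and zS: "z \<subseteq> S"
  defines "c \<equiv> \<lambda>l. card (reg S X y z l)"
  shows "card (X\<inter>y\<inter>z) = c (True,True,True)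
     \<and> card (X\<inter>y) = c (True,True,True) + c (True,True,False)
     \<and> card (X\<inter>z) = c (True,True,True) + c (True,False,True)
     \<and> card (y\<inter>z) = c (True,True,True) + c (False,True,True)
     \<and> card y = c (True,True,True) + c (True,True,False) + c (False,True,True) + c (False,True,False)
     \<and> card z = c (True,True,True) + c (True,False,True) + c (False,True,True) + c (False,False,True)
     \<and> card X = c (True,True,True) + c (True,True,False) + c (True,False,True) + c (True,False,False)
     \<and> card (S - X) = c (False,True,True) + c (False,True,False) + c (False,False,True) + c (False,False,False)"
proof -
  have fX: "finite X" using fS XS finite_subset by blast
  have fy: "finite y" using fS yS finite_subset by blast
  have fz: "finite z" using fS zS finite_subset by blast
  have r1: "reg S X y z (True,True,True) = X\<inter>y\<inter>z" using XS unfolding reg_def by auto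
  have r2: "reg S X y z (True,True,False) = X\<inter>y - z" using XS unfolding reg_def by auto
  have r3: "reg S X y z (True,False,True) = X\<inter>z - y" using XS unfolding reg_def by auto
  have r4: "reg S X y z (True,False,False) = X - y - z" using XS unfolding reg_def by auto
  have r5: "reg S X y z (False,True,True) = y\<inter>z - X" using yS unfolding reg_def by auto
  have r6: "reg S X y z (False,True,False) = y - X - z" using yS unfolding reg_def by auto
  have r7: "reg S X y z (False,False,True) = z - X - y" using zS unfolding reg_def by auto
  have r8: "reg S X y z (False,False,False) = S - X - y - z" unfolding reg_def by auto
  have e1: "card (X\<inter>y) = card (X\<inter>y\<inter>z) + card (X\<inter>y - z)"
    using card_split[of "X\<inter>y" z] fX by auto
  have e2: "card (X\<inter>z) = card (X\<inter>y\<inter>z) + card (X\<inter>z - y)"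
    using card_split[of "X\<inter>z" y] fX by (auto simp: Int_ac)
  have e3: "card (y\<inter>z) = card (X\<inter>y\<inter>z) + card (y\<inter>z - X)"
    using card_split[of "y\<inter>z" X] fy by (auto simp: Int_ac)
  have e4: "card y = card (X\<inter>y) + card (y - X)"
    using card_split[of "y" X] fy by (auto simp: Int_ac)
  have e5: "card (y - X) = card (y\<inter>z - X) + card (y - X - z)"
  proof -
    have "(y - X) \<inter> z = y\<inter>z - X" by auto
    then show ?thesis using card_split[of "y - X" z] fy by auto
  qed
  have e6: "card z = card (X\<inter>z) + card (z - X)"
    using card_split[of "z" X] fz by (auto simp: Int_ac)
  have e7: "card (z - X) = card (y\<inter>z - X) + card (z - X - y)"
  proof -
    have "(z - X) \<inter> y = y\<inter>z - X" by auto
    then show ?thesis using card_split[of "z - X" y] fz by auto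
  qed
  have e8: "card X = card (X\<inter>y) + card (X - y)"
    using card_split[of "X" y] fX by (auto simp: Int_ac)
  have e9: "card (X - y) = card (X\<inter>z - y) + card (X - y - z)"
  proof -
    have "(X - y) \<inter> z = X\<inter>z - y" by auto
    then show ?thesis using card_split[of "X - y" z] fX by auto
  qed
  have e10: "card (S - X) = card (y - X) + card (S - X - y)"
  proof -
    have "(S - X) \<inter> y = y - X" using yS by auto
    then show ?thesis using card_split[of "S - X" y] fS by auto
  qed
  have e11: "card (S - X - y) = card (z - X - y) + card (S - X - y - z)"
    proof -
    have "(S - X - y) \<inter> z = z - X - y" using zS by auto
    then show ?thesis using card_split[of "S - X - y" z] fS by auto
  qed
  show ?thesis unfolding c_def r1 r2 r3 r4 r5 r6 r7 r8
    using e1 e2 e3 e4 e5 e6 e7 e8 e9 e10 e11 by linarith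
qed




lemma perm_labels:
  assumes fS: "finite S" and eq: "\<And>l. card {x\<in>S. f x = l} = card {x\<in>S. g x = l}"
  shows "\<exists>\<sigma>. bij_betw \<sigma> S S \<and> (\<forall>x\<in>S. g (\<sigma> x) = f x)"
proof -
  have "\<forall>l. \<exists>h. bij_betw h {x\<in>S. f x = l} {x\<in>S. g x = l}"
    using finite_same_card_bij[of "{x\<in>S. f x = _}" "{x\<in>S. g x = _}"] fS eq by auto
  then obtain H where H: "\<And>l. bij_betw (H l) {x\<in>S. f x = l} {x\<in>S. g x = l}" by metis
  define \<sigma> where "\<sigma> x = H (f x) x" for x
  have mem: "\<sigma> x \<in> S \<and> g (\<sigma> x) = f x" if "x \<in> S" for x
    using H[of "f x"] that unfolding \<sigma>_def bij_betw_def by auto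
  have inj: "inj_on \<sigma> S"
  proof (rule inj_onI)
    fix x x' assume xs: "x \<in> S" "x' \<in> S" and e: "\<sigma> x = \<sigma> x'"
    then have "f x = f x'" using mem by metis
    then show "x = x'" using H[of "f x"] xs e unfolding \<sigma>_def bij_betw_def inj_on_def by auto
  qed
  have "\<sigma> ` S = S"
  proof
    show "\<sigma> ` S \<subseteq> S" using mem by auto
    show "S \<subseteq> \<sigma> ` S"
    proof
      fix w assume w: "w \<in> S"
      then have "w \<in> H (g w) ` {x\<in>S. f x = g w}" using H[of "g w"] unfolding bij_betw_def by auto
      then obtain x where "x \<in> S" "f x = g w" "w = H (g w) x" by auto
      then have "w = \<sigma> x" unfolding \<sigma>_def by simp
      then show "w \<in> \<sigma> ` S" using \<open>x \<in> S\<close> by blast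
    qed
  qed
  then show ?thesis using inj mem unfolding bij_betw_def by auto
qed

lemma fin_S[simp]: "finite (Sset m)" by (simp add: Sset_def)
lemma x0_S: "x0 m \<subseteq> Sset m" by (auto simp: Sset_def x0_def)
lemma card_x0[simp]: "card (x0 m) = m" by (simp add: x0_def)
lemma card_S[simp]: "card (Sset m) = 2*m+1" by (simp add: Sset_def)
lemma card_Sx0: "card (Sset m - x0 m) = m+1"
  using card_Diff_subset[OF _ x0_S, of m] by (simp add: x0_def)

lemma ksub_iff: "y \<in> ksub A k \<longleftrightarrow> y \<subseteq> A \<and> card y = k" by (simp add: ksub_def)
lemma Xset_iff: "y \<in> Xset m \<longleftrightarrow> y \<subseteq> Sset m \<and> (card y = m \<or> card y = m+1)"
  by (auto simp: Xset_def ksub_def)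

lemma G_props:
  assumes "\<sigma> \<in> Ggrp m"
  shows "bij_betw \<sigma> (Sset m) (Sset m)" "\<sigma> ` x0 m = x0 m" "inj_on \<sigma> (Sset m)"
  using assms unfolding Ggrp_def bij_betw_def by auto

lemma G_card: "\<sigma> \<in> Ggrp m \<Longrightarrow> A \<subseteq> Sset m \<Longrightarrow> card (\<sigma> ` A) = card A \<and> \<sigma> ` A \<subseteq> Sset m"
  using G_props[of \<sigma> m] by (auto simp: bij_betw_def card_image inj_on_subset)

lemma G_rho:
  assumes s: "\<sigma> \<in> Ggrp m" and yS: "y \<subseteq> Sset m" and zS: "z \<subseteq> Sset m"
  shows "rho m (\<sigma> ` y) (\<sigma> ` z) = rho m y z"
proof -
  have inj: "inj_on \<sigma> (Sset m)" and x: "\<sigma> ` x0 m = x0 m" using G_props[OF s] by auto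
  have i1: "\<sigma> ` (A \<inter> B) = \<sigma> ` A \<inter> \<sigma> ` B" if "A \<subseteq> Sset m" "B \<subseteq> Sset m" for A B
    using inj_on_image_Int[OF inj that] .
  have a: "x0 m \<inter> \<sigma> ` y = \<sigma> ` (x0 m \<inter> y)" using i1[OF x0_S yS] x by simp
  have b: "x0 m \<inter> \<sigma> ` z = \<sigma> ` (x0 m \<inter> z)" using i1[OF x0_S zS] x by simp
  have c: "\<sigma> ` y \<inter> \<sigma> ` z = \<sigma> ` (y \<inter> z)" using i1[OF yS zS] by simp
  have d: "\<sigma> ` (x0 m \<inter> y) \<inter> \<sigma> ` z = \<sigma> ` (x0 m \<inter> y \<inter> z)"
  proof -
    have "x0 m \<inter> y \<subseteq> Sset m" using x0_S by blast
    then have "\<sigma> ` (x0 m \<inter> y \<inter> z) = \<sigma> ` (x0 m \<inter> y) \<inter> \<sigma> ` z" using i1 zS by blast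
    then show ?thesis by simp
  qed
  have s1: "x0 m \<inter> y \<subseteq> Sset m" "x0 m \<inter> z \<subseteq> Sset m" "y \<inter> z \<subseteq> Sset m" "x0 m \<inter> y \<inter> z \<subseteq> Sset m"
    using x0_S yS zS by blast+
  show ?thesis unfolding rho_def a b c d
    using G_card[OF s s1(1)] G_card[OF s s1(2)] G_card[OF s s1(3)] G_card[OF s s1(4)] by auto
qed

lemma orbit_trans:
  assumes yS: "y \<subseteq> Sset m" and zS: "z \<subseteq> Sset m" and yS': "y' \<subseteq> Sset m" and zS': "z' \<subseteq> Sset m"
    and cy: "card y = card y'" and cz: "card z = card z'" and r: "rho m y z = rho m y' z'"
  shows "\<exists>\<sigma>\<in>Ggrp m. \<sigma> ` y = y' \<and> \<sigma> ` z = z'"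
proof -
  define S where "S = Sset m"
  define X where "X = x0 m"
  have fS: "finite S" and XS: "X \<subseteq> S" using x0_S by (auto simp: S_def X_def)
  note v1 = venn[OF fS XS yS[folded S_def] zS[folded S_def]]
  note v2 = venn[OF fS XS yS'[folded S_def] zS'[folded S_def]]
  have r': "card (X\<inter>y) = card (X\<inter>y')" "card (X\<inter>z) = card (X\<inter>z')" "card (y\<inter>z) = card (y'\<inter>z')"
      "card (X\<inter>y\<inter>z) = card (X\<inter>y'\<inter>z')" using r by (auto simp: rho_def X_def)
  have ceq: "card (reg S X y z l) = card (reg S X y' z' l)" for l
  proof -
    obtain b1 b2 b3 where l: "l = (b1,b2,b3)" by (cases l) auto
    from v1 v2 r' cy cz show ?thesis unfolding l
      apply (elim conjE)
      apply (cases b1; cases b2; cases b3)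
      apply simp_all
      done
  qed
  define f where "f x = (x\<in>X, x\<in>y, x\<in>z)" for x
  define g where "g x = (x\<in>X, x\<in>y', x\<in>z')" for x
  have "card {x\<in>S. f x = l} = card {x\<in>S. g x = l}" for l
    using ceq[of l] unfolding reg_def f_def g_def by simp
  then obtain \<sigma> where bij: "bij_betw \<sigma> S S" and lab: "\<forall>x\<in>S. g (\<sigma> x) = f x"
    using perm_labels[OF fS] by blast
  define \<tau> where "\<tau> x = (if x \<in> S then \<sigma> x else x)" for x
  have bij': "bij_betw \<tau> S S" using bij unfolding \<tau>_def by (rule bij_betw_cong[THEN iffD1, rotated]) auto
  have lab': "\<forall>x\<in>S. (\<tau> x \<in> X \<longleftrightarrow> x \<in> X) \<and> (\<tau> x \<in> y' \<longleftrightarrow> x \<in> y) \<and> (\<tau> x \<in> z' \<longleftrightarrow> x \<in> z)"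
    using lab unfolding f_def g_def \<tau>_def by auto
  have img: "\<tau> ` A = B" if "A \<subseteq> S" "B \<subseteq> S" "\<forall>x\<in>S. \<tau> x \<in> B \<longleftrightarrow> x \<in> A" for A B
  proof
    show "\<tau> ` A \<subseteq> B" using that by auto
    show "B \<subseteq> \<tau> ` A"
    proof
      fix w assume "w \<in> B"
      then have "w \<in> \<tau> ` S" using bij' that unfolding bij_betw_def by auto
      then obtain x where "x \<in> S" "w = \<tau> x" by auto
      then show "w \<in> \<tau> ` A" using that \<open>w \<in> B\<close> by auto
    qed
  qed
  have "\<tau> \<in> Ggrp m"
    unfolding Ggrp_def using bij' img[OF XS XS] lab' by (auto simp: S_def X_def \<tau>_def)
  moreover have "\<tau> ` y = y'" using img[of y y'] lab' yS yS' by (auto simp: S_def)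
  moreover have "\<tau> ` z = z'" using img[of z z'] lab' zS zS' by (auto simp: S_def)
  ultimately show ?thesis by blast
qed




definition tag :: "nat \<Rightarrow> nat set \<Rightarrow> nat set \<Rightarrow> nat" where
  "tag m y z = (if card y = m then (if card z = m then 0 else 1) else (if card z = m then 2 else 3))"
definition idx :: "nat \<Rightarrow> nat set \<Rightarrow> nat set \<Rightarrow> nat \<times> nat \<times> nat \<times> nat \<times> nat" where
  "idx m y z = (tag m y z, rho m y z)"
definition E :: "nat \<Rightarrow> nat \<times> nat \<times> nat \<times> nat \<times> nat \<Rightarrow> mat" where
  "E m k = (\<lambda>y z. if y \<in> Xset m \<and> z \<in> Xset m \<and> idx m y z = k then 1 else 0)"

lemma orbmat_E:
  assumes "a = m \<or> a = m+1" "b = m \<or> b = m+1"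
    "c = (if a = m then (if b = m then 0 else 1) else (if b = m then 2 else 3))"
  shows "orbmat m a b q = E m (c,q)"
proof -
  have "orbmat m a b q y z = E m (c,q) y z" for y z
  proof (cases "y \<subseteq> Sset m \<and> z \<subseteq> Sset m \<and> card y = a \<and> card z = b")
    case True
    then show ?thesis using assms unfolding orbmat_def E_def idx_def tag_def ksub_iff Xset_iff
      by auto
  next
    case False
    then show ?thesis using assms unfolding orbmat_def E_def idx_def tag_def ksub_iff Xset_iff
      by (auto split: if_splits)
  qed
  then show ?thesis by (auto simp: fun_eq_iff)
qed

lemma basisMat_E: "k \<in> basisIdx m \<Longrightarrow> basisMat m k = E m k"
proof -
  assume "k \<in> basisIdx m"
  then obtain c q where k: "k = (c,q)" and c: "c = 0 \<or> c = 1 \<or> c = 2 \<or> c = 3"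
    unfolding basisIdx_def by blast
  have "basisMat m (0,q) = E m (0,q)" unfolding basisMat_def Mmat_def by (simp add: orbmat_E)
  moreover have "basisMat m (1,q) = E m (1,q)" unfolding basisMat_def Rmat_def by (simp add: orbmat_E)
  moreover have "basisMat m (2,q) = E m (2,q)" unfolding basisMat_def Lmat_def
    by (simp add: orbmat_E numeral_eq_Suc)
  moreover have "basisMat m (3,q) = E m (3,q)" unfolding basisMat_def Fmat_def
    by (simp add: orbmat_E numeral_eq_Suc)
  ultimately show ?thesis using k c by auto
qed

lemma basisIdx_eq: "basisIdx m = (\<lambda>(y,z). idx m y z) ` (Xset m \<times> Xset m)"
proof
  show "basisIdx m \<subseteq> (\<lambda>(y,z). idx m y z) ` (Xset m \<times> Xset m)"
  proof
    fix k assume "k \<in> basisIdx m"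
    then obtain c y z where k: "k = (c, rho m y z)" "y \<subseteq> Sset m" "z \<subseteq> Sset m"
      "(c=0 \<and> card y = m \<and> card z = m) \<or> (c=1 \<and> card y = m \<and> card z = m+1) \<or>
       (c=2 \<and> card y = m+1 \<and> card z = m) \<or> (c=3 \<and> card y = m+1 \<and> card z = m+1)"
      unfolding basisIdx_def Iset_def ksub_iff by blast
    then have "k = idx m y z" "y \<in> Xset m" "z \<in> Xset m"
      by (auto simp: idx_def tag_def Xset_iff)
    then show "k \<in> (\<lambda>(y,z). idx m y z) ` (Xset m \<times> Xset m)" by force
  qed
  show "(\<lambda>(y,z). idx m y z) ` (Xset m \<times> Xset m) \<subseteq> basisIdx m"
  proof
    fix k assume "k \<in> (\<lambda>(y,z). idx m y z) ` (Xset m \<times> Xset m)"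
    then obtain y z where y: "y \<subseteq> Sset m" "card y = m \<or> card y = m+1" and z: "z \<subseteq> Sset m" "card z = m \<or> card z = m+1"
      and k: "k = idx m y z" by (auto simp: Xset_iff)
    have I: "rho m y z \<in> Iset m (card y) (card z)" unfolding Iset_def ksub_iff using y z by blast
    show "k \<in> basisIdx m" using y(2) z(2)
    proof (elim disjE)
      assume "card y = m" "card z = m" then show ?thesis using I k unfolding basisIdx_def idx_def tag_def by simp
    next
      assume "card y = m" "card z = m+1" then show ?thesis using I k unfolding basisIdx_def idx_def tag_def by simp
    next
      assume "card y = m+1" "card z = m" then show ?thesis using I k unfolding basisIdx_def idx_def tag_def by simp
    next
      assume "card y = m+1" "card z = m+1" then show ?thesis using I k unfolding basisIdx_def idx_def tag_def by simp
    qed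
  qed
qed

lemma E_centr: "E m k \<in> centralizer m"
proof -
  have "E m k (\<sigma> ` y) (\<sigma> ` z) = E m k y z" if s: "\<sigma> \<in> Ggrp m" and y: "y \<in> Xset m" and z: "z \<in> Xset m" for \<sigma> y z
  proof -
    have yS: "y \<subseteq> Sset m" and zS: "z \<subseteq> Sset m" using y z by (auto simp: Xset_iff)
    have "\<sigma> ` y \<in> Xset m" "\<sigma> ` z \<in> Xset m" "card (\<sigma> ` y) = card y" "card (\<sigma> ` z) = card z"
      using G_card[OF s yS] G_card[OF s zS] y z by (auto simp: Xset_iff)
    then show ?thesis using G_rho[OF s yS zS] y z by (simp add: E_def idx_def tag_def)
  qed
  then show ?thesis unfolding centralizer_def Xmats_def by (auto simp: E_def)
qed

lemma centr_const:
  assumes B: "B \<in> centralizer m" and X: "y \<in> Xset m" "z \<in> Xset m" "y' \<in> Xset m" "z' \<in> Xset m"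
    and e: "idx m y z = idx m y' z'"
  shows "B y z = B y' z'"
proof -
  have "card y = card y'" "card z = card z'" "rho m y z = rho m y' z'"
    using e X by (auto simp: idx_def tag_def Xset_iff split: if_splits)
  then obtain \<sigma> where s: "\<sigma> \<in> Ggrp m" "\<sigma> ` y = y'" "\<sigma> ` z = z'"
    using orbit_trans[of y m z y' z'] X by (auto simp: Xset_iff)
  then show ?thesis using B X unfolding centralizer_def by force
qed

lemma E_at: "k \<in> basisIdx m \<Longrightarrow> y \<in> Xset m \<Longrightarrow> z \<in> Xset m \<Longrightarrow> E m k y z = (if k = idx m y z then 1 else 0)"
  by (auto simp: E_def)

lemma E_inj: "inj_on (E m) (basisIdx m)"
proof (rule inj_onI)
  fix k k' assume k: "k \<in> basisIdx m" and k': "k' \<in> basisIdx m" and e: "E m k = E m k'"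
  obtain y z where yz: "y \<in> Xset m" "z \<in> Xset m" "k = idx m y z" using k unfolding basisIdx_eq by auto
  have "E m k' y z = 1" using e E_at[OF k yz(1,2)] yz by simp
  then show "k = k'" using E_at[OF k' yz(1,2)] yz by (simp split: if_splits)
qed




lemma E_indep: "\<not> module.dependent mscale (E m ` basisIdx m)"
proof
  assume "module.dependent mscale (E m ` basisIdx m)"
  then obtain t u v0 where t: "finite t" "t \<subseteq> E m ` basisIdx m" "(\<Sum>v\<in>t. mscale (u v) v) = 0"
     and v0: "v0 \<in> t" "u v0 \<noteq> 0"
    unfolding VS.dependent_explicit by blast
  obtain k0 where k0: "k0 \<in> basisIdx m" "v0 = E m k0" using t(2) v0(1) by auto
  obtain y z where yz: "y \<in> Xset m" "z \<in> Xset m" "k0 = idx m y z" using k0(1) unfolding basisIdx_eq by auto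
  have val: "v y z = (if v = v0 then 1 else 0)" if vt: "v \<in> t" for v
  proof -
    obtain k where k: "k \<in> basisIdx m" "v = E m k" using t(2) vt by blast
    have "k = k0 \<longleftrightarrow> v = v0" using E_inj[of m] k k0 unfolding inj_on_def by auto
    then show ?thesis using E_at[OF k(1) yz(1,2)] yz(3) k by auto
  qed
  have "0 = (\<Sum>v\<in>t. mscale (u v) v) y z" using t(3) by simp
  also have "\<dots> = (\<Sum>v\<in>t. u v * (if v = v0 then 1 else 0))"
    unfolding sum_mat_apply mscale_apply using val by (intro sum.cong) auto
  also have "\<dots> = u v0" using t(1) v0(1) by (simp add: if_distrib cong: if_cong)
  finally show False using v0(2) by simp
qed

lemma centr_subspace: "VS.subspace (centralizer m)"
  unfolding VS.subspace_def centralizer_def Xmats_def by auto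

definition rep :: "nat \<Rightarrow> nat \<times> nat \<times> nat \<times> nat \<times> nat \<Rightarrow> nat set \<times> nat set" where
  "rep m k = (SOME p. p \<in> Xset m \<times> Xset m \<and> idx m (fst p) (snd p) = k)"

lemma rep_props: "k \<in> basisIdx m \<Longrightarrow> rep m k \<in> Xset m \<times> Xset m \<and> idx m (fst (rep m k)) (snd (rep m k)) = k"
proof -
  assume "k \<in> basisIdx m"
  then obtain y z where "y \<in> Xset m" "z \<in> Xset m" "k = idx m y z" unfolding basisIdx_eq by auto
  then have "\<exists>p. p \<in> Xset m \<times> Xset m \<and> idx m (fst p) (snd p) = k" by (intro exI[of _ "(y,z)"]) auto
  then show ?thesis unfolding rep_def by (rule someI_ex)
qed

lemma finite_X: "finite (Xset m)"
proof (rule finite_subset[of _ "Pow (Sset m)"])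
  show "Xset m \<subseteq> Pow (Sset m)" by (auto simp: Xset_iff)
qed simp

lemma finite_basisIdx: "finite (basisIdx m)"
  unfolding basisIdx_eq using finite_X by (intro finite_imageI finite_cartesian_product)

lemma centr_expand:
  assumes B: "B \<in> centralizer m"
  shows "B = (\<Sum>k\<in>basisIdx m. mscale (B (fst (rep m k)) (snd (rep m k))) (E m k))"
proof -
  have pt: "B y z = (\<Sum>k\<in>basisIdx m. B (fst (rep m k)) (snd (rep m k)) * E m k y z)" for y z
  proof (cases "y \<in> Xset m \<and> z \<in> Xset m")
    case True
    then have k: "idx m y z \<in> basisIdx m" unfolding basisIdx_eq by auto
    have "(\<Sum>k\<in>basisIdx m. B (fst (rep m k)) (snd (rep m k)) * E m k y z)
        = (\<Sum>k\<in>basisIdx m. if k = idx m y z then B (fst (rep m k)) (snd (rep m k)) else 0)"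
      using True by (intro sum.cong refl) (simp add: E_def)
    also have "\<dots> = B (fst (rep m (idx m y z))) (snd (rep m (idx m y z)))"
      using finite_basisIdx k by simp
    also have "\<dots> = B y z"
      using rep_props[OF k] True B by (intro centr_const[where m=m]) auto
    finally show ?thesis by simp
  next
    case False
    have "B \<in> Xmats m" using B unfolding centralizer_def by blast
    then have "B y z = 0" using False unfolding Xmats_def by blast
    moreover have "E m k y z = 0" for k
    proof -
      have "\<not>(y \<in> Xset m \<and> z \<in> Xset m \<and> idx m y z = k)" using False by blast
      then show ?thesis unfolding E_def by (rule if_not_P)
    qed
    ultimately show ?thesis by simp
  qed
  show ?thesis
    by (intro ext) (simp only: sum_mat_apply mscale_apply pt[symmetric])
qed

lemma E_span: "module.span mscale (E m ` basisIdx m) = centralizer m"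
proof
  show "VS.span (E m ` basisIdx m) \<subseteq> centralizer m"
    using centr_subspace E_centr by (intro VS.span_minimal) blast+
  show "centralizer m \<subseteq> VS.span (E m ` basisIdx m)"
  proof
    fix B assume B: "B \<in> centralizer m"
    show "B \<in> VS.span (E m ` basisIdx m)"
      by (subst centr_expand[OF B]) (intro VS.span_sum VS.span_scale VS.span_base imageI)
  qed
qed

lemma dim_centr: "vector_space.dim mscale (centralizer m) = card (basisIdx m)"
proof -
  have "VS.dim (centralizer m) = card (E m ` basisIdx m)"
  proof (rule VS.dim_eq_card)
    show "VS.span (E m ` basisIdx m) = VS.span (centralizer m)"
      using E_span[of m] centr_subspace[of m] VS.span_eq_iff by metis
    show "VS.independent (E m ` basisIdx m)" by (rule E_indep)
  qed
  then show ?thesis using card_image[OF E_inj] by simp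
qed




definition Tset :: "nat \<Rightarrow> (nat \<times> nat \<times> nat \<times> nat) set" where
  "Tset m = {(i,j,t,p). p \<le> i \<and> p \<le> j \<and> i + j \<le> m + p \<and> p \<le> t \<and> t + i \<le> m + p \<and> t + j \<le> m + p
              \<and> m + p \<le> i + j + t + 1}"

definition Fmap :: "nat \<Rightarrow> nat \<times> nat \<times> nat \<times> nat \<Rightarrow> nat list" where
  "Fmap m = (\<lambda>(i,j,t,p). let a = i - p; b = j - p; c = m + p - i - j; d = p; s = t - p in
     if s = c then [a,b,c,d,0]
     else if s < c then [a,b,s,d+1-(c-s),2*(c-s)-1]
     else [a-(s-c),b-(s-c),c,d,2*(s-c)])"

definition Gmap :: "nat list \<Rightarrow> nat \<times> nat \<times> nat \<times> nat" where
  "Gmap l = (let e1 = l!0; e2 = l!1; e3 = l!2; e4 = l!3; e5 = l!4 in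
     if e5 = 0 then (e1+e4, e2+e4, e4+e3, e4)
     else if odd e5 then (let k = e5 div 2; d = e4 + k in (e1+d, e2+d, d+e3, d))
     else (let k = e5 div 2 in (e1+k+e4, e2+k+e4, e4+e3+k, e4)))"

lemma G_zero: "Gmap [a,b,c,d,0] = (a+d, b+d, d+c, d)"
  by (simp add: Gmap_def)
lemma G_odd: "Gmap [a,b,c,d,2*k+1] = (a+(d+k), b+(d+k), (d+k)+c, d+k)"
  by (simp add: Gmap_def Let_def)
lemma G_even: "n \<ge> 1 \<Longrightarrow> Gmap [a,b,c,d,2*n] = (a+n+d, b+n+d, d+c+n, d)"
  by (simp add: Gmap_def Let_def)

lemma F1': "Fmap (a+b+c+d) (a+d, b+d, d+c, d) = [a,b,c,d,0]"
  by (simp add: Fmap_def)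
lemma F2': "Fmap (a+b+c+d+(2*k+1)) (a+(d+k), b+(d+k), (d+k)+c, d+k) = [a,b,c,d,2*k+1]"
  by (simp add: Fmap_def Let_def)
lemma F3': "n \<ge> 1 \<Longrightarrow> Fmap (a+b+c+d+2*n) (a+n+d, b+n+d, d+c+n, d) = [a,b,c,d,2*n]"
  by (simp add: Fmap_def Let_def)

lemma parity5: "e = 0 \<or> (\<exists>k. e = 2*k+1) \<or> (\<exists>n::nat. n \<ge> 1 \<and> e = 2*n)"
proof (cases "e = 0")
  case False
  show ?thesis
  proof (cases "odd e")
    case True
    then have "e = 2*(e div 2)+1" by presburger
    then show ?thesis by blast
  next
    case ev: False
    then have "e div 2 \<ge> 1 \<and> e = 2*(e div 2)" using False by presburger
    then show ?thesis by blast
  qed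
qed simp

lemma list5: "length l = 5 \<Longrightarrow> l = [l!0,l!1,l!2,l!3,l!4]"
  by (simp add: list_eq_iff_nth_eq less_Suc_eq numeral_eq_Suc)

lemma L_cases:
  assumes "l \<in> {l::nat list. length l = 5 \<and> sum_list l = m}"
  obtains a b c d where "l = [a,b,c,d,0]" "m = a+b+c+d"
    | a b c d k where "l = [a,b,c,d,2*k+1]" "m = a+b+c+d+(2*k+1)"
    | a b c d n where "n \<ge> 1" "l = [a,b,c,d,2*n]" "m = a+b+c+d+2*n"
proof -
  from assms have len: "length l = 5" and s: "sum_list l = m" by auto
  obtain x0 x1 x2 x3 x4 where l: "l = [x0,x1,x2,x3,x4]" using list5[OF len] by blast
  have s': "m = x0+x1+x2+x3+x4" using s unfolding l by (simp add: add.assoc)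
  from parity5[of x4] show thesis
  proof (elim disjE exE conjE)
    assume "x4 = 0" then show thesis using that(1)[of x0 x1 x2 x3] l s' by simp
  next
    fix k assume "x4 = 2*k+1" then show thesis using that(2)[of x0 x1 x2 x3 k] l s' by simp
  next
    fix n assume "n \<ge> 1" "x4 = 2*n" then show thesis using that(3)[of n x0 x1 x2 x3] l s' by simp
  qed
qed

lemma G_inj: "inj_on Gmap {l. length l = 5 \<and> sum_list l = m}"
proof (rule inj_onI)
  have FG: "Fmap m (Gmap l) = l" if "l \<in> {l. length l = 5 \<and> sum_list l = m}" for l
    using that
  proof (rule L_cases)
    fix a b c d assume "l = [a,b,c,d,0]" "m = a+b+c+d" then show ?thesis by (simp add: G_zero F1')
  next
    fix a b c d k assume h: "l = [a,b,c,d,2*k+1]" "m = a+b+c+d+(2*k+1)"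
    show ?thesis unfolding h G_odd by (rule F2')
  next
    fix a b c d n assume "n \<ge> 1" "l = [a,b,c,d,2*n]" "m = a+b+c+d+2*n" then show ?thesis by (simp add: G_even F3')
  qed
  fix l l' assume a: "l \<in> {l. length l = 5 \<and> sum_list l = m}" "l' \<in> {l. length l = 5 \<and> sum_list l = m}" and e: "Gmap l = Gmap l'"
  have "l = Fmap m (Gmap l)" using FG[OF a(1)] by simp
  also have "\<dots> = Fmap m (Gmap l')" using e by simp
  also have "\<dots> = l'" using FG[OF a(2)] by simp
  finally show "l = l'" .
qed

lemma G_img: "Gmap ` {l. length l = 5 \<and> sum_list l = m} = Tset m"
proof
  show "Gmap ` {l. length l = 5 \<and> sum_list l = m} \<subseteq> Tset m"
  proof
    fix x assume "x \<in> Gmap ` {l. length l = 5 \<and> sum_list l = m}"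
    then obtain l where l: "l \<in> {l. length l = 5 \<and> sum_list l = m}" "x = Gmap l" by auto
    from l(1) show "x \<in> Tset m"
    proof (rule L_cases)
      fix a b c d assume "l = [a,b,c,d,0]" "m = a+b+c+d" then show ?thesis using l(2) by (simp add: G_zero Tset_def)
    next
      fix a b c d k assume h: "l = [a,b,c,d,2*k+1]" "m = a+b+c+d+(2*k+1)"
      have "x = (a+(d+k), b+(d+k), (d+k)+c, d+k)" using l(2) unfolding h G_odd .
      then show ?thesis using h by (simp add: Tset_def)
    next
      fix a b c d n assume "n \<ge> 1" "l = [a,b,c,d,2*n]" "m = a+b+c+d+2*n" then show ?thesis using l(2) by (simp add: G_even Tset_def)
    qed
  qed
  show "Tset m \<subseteq> Gmap ` {l. length l = 5 \<and> sum_list l = m}"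
  proof
    fix x assume "x \<in> Tset m"
    then obtain i j t p where x: "x = (i,j,t,p)" and c: "p \<le> i" "p \<le> j" "i + j \<le> m + p" "p \<le> t" "t + i \<le> m + p" "t + j \<le> m + p"
              "m + p \<le> i + j + t + 1" unfolding Tset_def by auto
    define c0 where "c0 = m + p - i - j"
    consider (a) "t - p = c0" | (b) "t - p < c0" | (cc) "t - p > c0" by linarith
    then show "x \<in> Gmap ` {l. length l = 5 \<and> sum_list l = m}"
    proof cases
      case a
      have "x = Gmap [i-p, j-p, c0, p, 0]" "sum_list [i-p, j-p, c0, p, 0] = m"
        using a c unfolding x G_zero c0_def by auto
      then show ?thesis by force
    next
      case b
      define k where "k = c0 - (t-p) - 1"
      have "x = Gmap [i-p, j-p, t-p, p-k, 2*k+1]" "sum_list [i-p, j-p, t-p, p-k, 2*k+1] = m"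
        using b c unfolding x G_odd c0_def k_def by auto
      then show ?thesis by force
    next
      case cc
      define n where "n = (t-p) - c0"
      have n: "n \<ge> 1" using cc unfolding n_def by simp
      have g: "Gmap [i-p-n, j-p-n, c0, p, 2*n] = (i-p-n+n+p, j-p-n+n+p, p+c0+n, p)" by (rule G_even[OF n])
      have "x = (i-p-n+n+p, j-p-n+n+p, p+c0+n, p)" using cc c unfolding x c0_def n_def by auto
      then have "x = Gmap [i-p-n, j-p-n, c0, p, 2*n]" using g by simp
      moreover have "sum_list [i-p-n, j-p-n, c0, p, 2*n] = m" using cc c unfolding c0_def n_def by auto
      ultimately show ?thesis by force
    qed
  qed
qed

lemma binom_aux: "((m::nat) + 5 - 1) choose m = (m + 4) choose 4"
proof -
  have a: "m + 5 - 1 = m + 4" by simp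
  have b: "(m + 4) choose 4 = (m+4) choose (m + 4 - 4)" by (rule binomial_symmetric) simp
  have c: "m + 4 - 4 = m" by simp
  show ?thesis unfolding a using b unfolding c by (rule sym)
qed

lemma card_Tset: "card (Tset m) = (m + 4) choose 4"
proof -
  have "card (Tset m) = card (Gmap ` {l::nat list. length l = 5 \<and> sum_list l = m})"
    by (simp only: G_img)
  also have "\<dots> = card {l::nat list. length l = 5 \<and> sum_list l = m}" by (rule card_image[OF G_inj])
  also have "\<dots> = (m + 5 - 1) choose m" by (rule card_length_sum_list)
  also have "\<dots> = (m + 4) choose 4" by (rule binom_aux)
  finally show ?thesis .
qed




lemma Iset_sub_T: "Iset m m m \<subseteq> Tset m"
proof
  fix q assume "q \<in> Iset m m m"
  then obtain y z where y: "y \<subseteq> Sset m" "card y = m" and z: "z \<subseteq> Sset m" "card z = m" and q: "q = rho m y z"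
    unfolding Iset_def ksub_iff by blast
  note v = venn[OF fin_S x0_S y(1) z(1)]
  show "q \<in> Tset m" unfolding q rho_def Tset_def using v y z card_x0[of m] card_Sx0[of m]
    by (simp only: mem_Collect_eq prod.case, elim conjE, linarith)
qed

lemma card_Un_iv: "finite A \<Longrightarrow> (\<forall>x\<in>A. x < c) \<Longrightarrow> card (A \<union> {c..d::nat}) = card A + card {c..d}"
  by (rule card_Un_disjoint) auto

lemma T_sub_Iset: "Tset m \<subseteq> Iset m m m"
proof
  fix q assume "q \<in> Tset m"
  then obtain i j t p where q: "q = (i,j,t,p)" and c: "p \<le> i" "p \<le> j" "i + j \<le> m + p" "p \<le> t" "t + i \<le> m + p" "t + j \<le> m + p"
              "m + p \<le> i + j + t + 1" unfolding Tset_def by auto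
  define s where "s = t - p"
  define y where "y = {1..i} \<union> {m+1..2*m-i}"
  define z where "z = {1..p} \<union> {i+1..i+j-p} \<union> {m+1..m+s} \<union> {2*m-i+1..3*m-i-j-s}"
  have x0: "x0 m = {1..m}" by (simp add: x0_def)
  have yS: "y \<subseteq> Sset m" unfolding y_def Sset_def using c by auto
  have zS: "z \<subseteq> Sset m" unfolding z_def Sset_def s_def using c by auto
  have cy: "card y = m" unfolding y_def using c by (subst card_Un_iv) auto
  have cz: "card z = m" unfolding z_def using c s_def
    by (subst card_Un_iv; (subst card_Un_iv)?; (subst card_Un_iv)?) auto
  have i1: "x0 m \<inter> y = {1..i}" unfolding x0 y_def using c by auto
  have i2: "x0 m \<inter> z = {1..p} \<union> {i+1..i+j-p}" unfolding x0 z_def using c s_def by auto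
  have i3: "y \<inter> z = {1..p} \<union> {m+1..m+s}" unfolding y_def z_def using c s_def by auto
  have i4: "{1..i} \<inter> z = {1..p}" unfolding z_def using c s_def by auto
  have "rho m y z = (i,j,t,p)" unfolding rho_def i1 i2 i3 i4 using c s_def
    by (simp add: card_Un_iv)
  then show "q \<in> Iset m m m" unfolding Iset_def ksub_iff q mem_Collect_eq
    using yS zS cy cz by (intro exI[of _ y] exI[of _ z]) simp
qed




lemma cdiff: "finite A \<Longrightarrow> card (A - B) = card A - card (A \<inter> B)"
  by (simp add: card_Diff_subset_Int)

lemma rho_compl_z:
  assumes y: "y \<subseteq> Sset m" and z: "z \<subseteq> Sset m"
  shows "rho m y (Sset m - z) = (card (x0 m \<inter> y), m - card (x0 m \<inter> z), card y - card (y \<inter> z),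
                                 card (x0 m \<inter> y) - card (x0 m \<inter> y \<inter> z))"
proof -
  have fy: "finite y" using y finite_subset fin_S by blast
  have "x0 m \<inter> (Sset m - z) = x0 m - z" using x0_S by blast
  moreover have "y \<inter> (Sset m - z) = y - z" using y by blast
  moreover have "x0 m \<inter> y \<inter> (Sset m - z) = x0 m \<inter> y - z" using y by blast
  moreover have "finite (x0 m)" by (simp add: x0_def)
  ultimately show ?thesis unfolding rho_def using fy
    by (simp add: cdiff Int_assoc)
qed

lemma rho_compl_y:
  assumes y: "y \<subseteq> Sset m" and z: "z \<subseteq> Sset m"
  shows "rho m (Sset m - y) z = (m - card (x0 m \<inter> y), card (x0 m \<inter> z), card z - card (y \<inter> z),
                                 card (x0 m \<inter> z) - card (x0 m \<inter> y \<inter> z))"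
proof -
  have fz: "finite z" using z finite_subset fin_S by blast
  have "x0 m \<inter> (Sset m - y) = x0 m - y" using x0_S by blast
  moreover have "(Sset m - y) \<inter> z = z - y" using z by blast
  moreover have "(x0 m - y) \<inter> z = x0 m \<inter> z - y" by blast
  moreover have "z \<inter> y = y \<inter> z" "x0 m \<inter> z \<inter> y = x0 m \<inter> y \<inter> z" by blast+
  moreover have "finite (x0 m)" by (simp add: x0_def)
  ultimately show ?thesis unfolding rho_def using fz
    by (simp add: cdiff Int_assoc)
qed

lemma rho_bounds:
  assumes y: "y \<subseteq> Sset m" and z: "z \<subseteq> Sset m" and r: "rho m y z = (i,j,t,p)"
  shows "i \<le> m" "j \<le> m" "t \<le> card y" "t \<le> card z" "p \<le> i" "p \<le> j"
proof -
  have fy: "finite y" "finite z" "finite (x0 m)" using y z finite_subset fin_S by (blast, blast, simp add: x0_def)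
  show "i \<le> m" "j \<le> m" "t \<le> card y" "t \<le> card z" "p \<le> i" "p \<le> j" using r unfolding rho_def
    using card_mono[OF fy(3), of "x0 m \<inter> y"] card_mono[OF fy(3), of "x0 m \<inter> z"]
      card_mono[OF fy(1), of "y \<inter> z"] card_mono[OF fy(2), of "y \<inter> z"]
      card_mono[of "x0 m \<inter> y" "x0 m \<inter> y \<inter> z"] card_mono[of "x0 m \<inter> z" "x0 m \<inter> y \<inter> z"] fy
    by auto
qed

definition tz :: "nat \<Rightarrow> nat \<Rightarrow> nat \<times> nat \<times> nat \<times> nat \<Rightarrow> nat \<times> nat \<times> nat \<times> nat" where
  "tz m a = (\<lambda>(i,j,t,p). (i, m - j, a - t, i - p))"
definition ty :: "nat \<Rightarrow> nat \<Rightarrow> nat \<times> nat \<times> nat \<times> nat \<Rightarrow> nat \<times> nat \<times> nat \<times> nat" where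
  "ty m b = (\<lambda>(i,j,t,p). (m - i, j, b - t, j - p))"

lemma Iset_elem:
  assumes "q \<in> Iset m a b"
  obtains y z where "y \<subseteq> Sset m" "card y = a" "z \<subseteq> Sset m" "card z = b" "q = rho m y z"
  using assms unfolding Iset_def ksub_iff by blast

lemma Iset_intro: "y \<subseteq> Sset m \<Longrightarrow> card y = a \<Longrightarrow> z \<subseteq> Sset m \<Longrightarrow> card z = b \<Longrightarrow> rho m y z \<in> Iset m a b"
  unfolding Iset_def ksub_iff by blast

lemma card_compl: "y \<subseteq> Sset m \<Longrightarrow> card (Sset m - y) = 2*m+1 - card y"
  by (simp add: card_Diff_subset finite_subset)

lemma compl_z:
  assumes b: "b \<le> 2*m+1"
  shows "Iset m a (2*m+1-b) = tz m a ` Iset m a b" "inj_on (tz m a) (Iset m a b)"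
proof -
  show "Iset m a (2*m+1-b) = tz m a ` Iset m a b"
  proof
    show "Iset m a (2*m+1-b) \<subseteq> tz m a ` Iset m a b"
    proof
      fix q assume "q \<in> Iset m a (2*m+1-b)"
      then obtain y z where y: "y \<subseteq> Sset m" "card y = a" and z: "z \<subseteq> Sset m" "card z = 2*m+1-b"
        and q: "q = rho m y z" by (rule Iset_elem)
      define z' where "z' = Sset m - z"
      have z': "z' \<subseteq> Sset m" "card z' = b" "Sset m - z' = z"
        using z b card_compl[OF z(1)] unfolding z'_def by auto
      have "q = tz m a (rho m y z')" unfolding q tz_def
        using rho_compl_z[OF y(1) z'(1)] z'(3) y(2) by (simp add: rho_def)
      then show "q \<in> tz m a ` Iset m a b" using Iset_intro[OF y z'(1,2)] by blast
    qed
    show "tz m a ` Iset m a b \<subseteq> Iset m a (2*m+1-b)"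
    proof
      fix q assume "q \<in> tz m a ` Iset m a b"
      then obtain q0 where q: "q = tz m a q0" and "q0 \<in> Iset m a b" by blast
      then obtain y z where y: "y \<subseteq> Sset m" "card y = a" and z: "z \<subseteq> Sset m" "card z = b"
        and q0: "q0 = rho m y z" by (metis Iset_elem)
      have "q = rho m y (Sset m - z)" unfolding q q0 tz_def
        using rho_compl_z[OF y(1) z(1)] y(2) by (simp add: rho_def)
      then show "q \<in> Iset m a (2*m+1-b)"
        using Iset_intro[OF y, of "Sset m - z" "2*m+1-b"] card_compl[OF z(1)] z by auto
    qed
  qed
  show "inj_on (tz m a) (Iset m a b)"
  proof (rule inj_onI)
    fix q q' assume "q \<in> Iset m a b" "q' \<in> Iset m a b" and e: "tz m a q = tz m a q'"
    obtain i j t p where qq: "q = (i,j,t,p)" by (cases q) auto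
    obtain i' j' t' p' where qq': "q' = (i',j',t',p')" by (cases q') auto
    have "j \<le> m" "t \<le> a" "p \<le> i" using \<open>q \<in> Iset m a b\<close> rho_bounds qq by (metis Iset_elem)+
    moreover have "j' \<le> m" "t' \<le> a" "p' \<le> i'" using \<open>q' \<in> Iset m a b\<close> rho_bounds qq' by (metis Iset_elem)+
    ultimately show "q = q'" using e unfolding qq qq' tz_def by auto
  qed
qed

lemma compl_y:
  assumes a: "a \<le> 2*m+1"
  shows "Iset m (2*m+1-a) b = ty m b ` Iset m a b" "inj_on (ty m b) (Iset m a b)"
proof -
  show "Iset m (2*m+1-a) b = ty m b ` Iset m a b"
  proof
    show "Iset m (2*m+1-a) b \<subseteq> ty m b ` Iset m a b"
    proof
      fix q assume "q \<in> Iset m (2*m+1-a) b"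
      then obtain y z where y: "y \<subseteq> Sset m" "card y = 2*m+1-a" and z: "z \<subseteq> Sset m" "card z = b"
        and q: "q = rho m y z" by (rule Iset_elem)
      define y' where "y' = Sset m - y"
      have y': "y' \<subseteq> Sset m" "card y' = a" "Sset m - y' = y"
        using y a card_compl[OF y(1)] unfolding y'_def by auto
      have "q = ty m b (rho m y' z)" unfolding q ty_def
        using rho_compl_y[OF y'(1) z(1)] y'(3) z(2) by (simp add: rho_def)
      then show "q \<in> ty m b ` Iset m a b" using Iset_intro[OF y'(1,2) z] by blast
    qed
    show "ty m b ` Iset m a b \<subseteq> Iset m (2*m+1-a) b"
    proof
      fix q assume "q \<in> ty m b ` Iset m a b"
      then obtain q0 where q: "q = ty m b q0" and "q0 \<in> Iset m a b" by blast
      then obtain y z where y: "y \<subseteq> Sset m" "card y = a" and z: "z \<subseteq> Sset m" "card z = b"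
        and q0: "q0 = rho m y z" by (metis Iset_elem)
      have "q = rho m (Sset m - y) z" unfolding q q0 ty_def
        using rho_compl_y[OF y(1) z(1)] z(2) by (simp add: rho_def)
      then show "q \<in> Iset m (2*m+1-a) b"
        using Iset_intro[of "Sset m - y" m "2*m+1-a", OF _ _ z] card_compl[OF y(1)] y by auto
    qed
  qed
  show "inj_on (ty m b) (Iset m a b)"
  proof (rule inj_onI)
    fix q q' assume "q \<in> Iset m a b" "q' \<in> Iset m a b" and e: "ty m b q = ty m b q'"
    obtain i j t p where qq: "q = (i,j,t,p)" by (cases q) auto
    obtain i' j' t' p' where qq': "q' = (i',j',t',p')" by (cases q') auto
    have "i \<le> m" "t \<le> b" "p \<le> j" using \<open>q \<in> Iset m a b\<close> rho_bounds qq by (metis Iset_elem)+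
    moreover have "i' \<le> m" "t' \<le> b" "p' \<le> j'" using \<open>q' \<in> Iset m a b\<close> rho_bounds qq' by (metis Iset_elem)+
    ultimately show "q = q'" using e unfolding qq qq' ty_def by auto
  qed
qed




lemma finite_Iset: "finite (Iset m a b)"
proof -
  have "Iset m a b \<subseteq> (\<lambda>(y,z). rho m y z) ` (Pow (Sset m) \<times> Pow (Sset m))"
    unfolding Iset_def ksub_iff by auto
  then show ?thesis by (rule finite_subset) simp
qed

lemma card_I00: "card (Iset m m m) = (m+4) choose 4"
  using Iset_sub_T T_sub_Iset card_Tset by (metis subset_antisym)

lemma card_I01: "card (Iset m m (m+1)) = (m+4) choose 4"
proof -
  have e: "2*m+1-m = m+1" by simp
  have "card (Iset m m (m+1)) = card (tz m m ` Iset m m m)" using compl_z(1)[of m m m] e by simp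
  also have "\<dots> = card (Iset m m m)" by (rule card_image[OF compl_z(2)]) simp
  finally show ?thesis using card_I00 by simp
qed

lemma card_I10: "card (Iset m (m+1) m) = (m+4) choose 4"
proof -
  have e: "2*m+1-m = m+1" by simp
  have "card (Iset m (m+1) m) = card (ty m m ` Iset m m m)" using compl_y(1)[of m m m] e by simp
  also have "\<dots> = card (Iset m m m)" by (rule card_image[OF compl_y(2)]) simp
  finally show ?thesis using card_I00 by simp
qed

lemma card_I11: "card (Iset m (m+1) (m+1)) = (m+4) choose 4"
proof -
  have e: "2*m+1-m = m+1" by simp
  have "card (Iset m (m+1) (m+1)) = card (ty m (m+1) ` Iset m m (m+1))" using compl_y(1)[of m m "m+1"] e by simp
  also have "\<dots> = card (Iset m m (m+1))" by (rule card_image[OF compl_y(2)]) simp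
  finally show ?thesis using card_I01 by simp
qed

lemma card_basisIdx: "card (basisIdx m) = 4 * ((m+4) choose 4)"
proof -
  let ?A = "{0::nat} \<times> Iset m m m" and ?B = "{1::nat} \<times> Iset m m (m+1)"
    and ?C = "{2::nat} \<times> Iset m (m+1) m" and ?D = "{3::nat} \<times> Iset m (m+1) (m+1)"
  have f: "finite ?A" "finite ?B" "finite ?C" "finite ?D" using finite_Iset by auto
  have "card (?A \<union> ?B \<union> ?C \<union> ?D) = card (?A \<union> ?B \<union> ?C) + card ?D"
    using f by (intro card_Un_disjoint) auto
  also have "card (?A \<union> ?B \<union> ?C) = card (?A \<union> ?B) + card ?C"
    using f by (intro card_Un_disjoint) auto
  also have "card (?A \<union> ?B) = card ?A + card ?B"
    using f by (intro card_Un_disjoint) auto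
  finally show ?thesis unfolding basisIdx_def
    by (simp add: card_cartesian_product_singleton card_I00 card_I01[simplified] card_I10[simplified] card_I11[simplified])
qed

theorem theorem3p4:
  fixes m :: nat
  assumes "m \<ge> 1"
  shows "inj_on (basisMat m) (basisIdx m)
       \<and> basisMat m ` basisIdx m \<subseteq> centralizer m
       \<and> \<not> module.dependent mscale (basisMat m ` basisIdx m)
       \<and> module.span mscale (basisMat m ` basisIdx m) = centralizer m
       \<and> vector_space.dim mscale (centralizer m) = 4 * ((m + 4) choose 4)"
proof -
  have img: "basisMat m ` basisIdx m = E m ` basisIdx m"
    using basisMat_E by (intro image_cong) auto
  have inj: "inj_on (basisMat m) (basisIdx m)"
    using E_inj[of m] basisMat_E[of _ m] inj_on_cong by metis
  show ?thesis unfolding img using inj E_centr E_indep E_span dim_centr card_basisIdx by auto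
qed


end
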